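(* For every integer $n\ge 1$, let \[V'_n=\{t_{3i+1}t_{3i+3}-t_{3i+2}t_{3n+1} : i=0,\dots,n-1\},\] \[V''_n=\{t_{3i+1}t_{3i+3}t_{3j+2}-t_{3j+1}t_{3j+3}t_{3i+2} : 0\le i<j\le n-1\}.\] Then $V_n=V'_n\cup V''_n$ is the universal Gröbner basis of the toric ideal $I_{P(2_n)}$.
   Context: Let $e_k\in\mathbb{R}^{2n+1}$ be standard basis vectors and let $M_n$ be the $(2n+1)\times(3n+1)$ matrix with columns $m_{3i+1}=e_{2i+1}+e_{2n+1}$, $m_{3i+2}=e_{2i+1}+e_{2i+2}+e_{2n+1}$, $m_{3i+3}=e_{2i+2}+e_{2n+1}$ for $i=0,\dots,n-1$, and $m_{3n+1}=e_{2n+1}$ (these are the nonzero codewords of the code $P(2_n)$). The toric ideal $I_{P(2_n)}$ is the kernel of $\mathbb{C}[t_1,\dots,t_{3n+1}]\to\mathbb{C}[x_1,\dots,x_{2n+1}]$, $t_k\mapsto x^{m_k}$. The universal Gröbner basis of an ideal is the union of its reduced Gröbner bases over all monomial orders. *)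

theory Defs
  imports Complex_Main "HOL-Library.Poly_Mapping"
begin

text \<open>Multivariate polynomials over the complex numbers: finitely supported maps from
  exponent vectors (monomials, nat \<Rightarrow> nat, variable t_k has index k) to coefficients.\<close>

type_synonym monom = "nat \<Rightarrow>\<^sub>0 nat"
type_synonym mpoly = "monom \<Rightarrow>\<^sub>0 complex"

definition var :: "nat \<Rightarrow> mpoly" where
  "var k = Poly_Mapping.single (Poly_Mapping.single k 1) 1"

definition monoms_in :: "nat set \<Rightarrow> monom set" where
  "monoms_in S = {m. Poly_Mapping.keys m \<subseteq> S}"

definition polys_in :: "nat set \<Rightarrow> mpoly set" where
  "polys_in S = {p. Poly_Mapping.keys p \<subseteq> monoms_in S}"

definition mdvd :: "monom \<Rightarrow> monom \<Rightarrow> bool" where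
  "mdvd m m' \<longleftrightarrow> (\<forall>k. Poly_Mapping.lookup m k \<le> Poly_Mapping.lookup m' k)"

definition monomial_order :: "nat set \<Rightarrow> (monom \<Rightarrow> monom \<Rightarrow> bool) \<Rightarrow> bool" where
  "monomial_order S ord \<longleftrightarrow>
     (\<forall>m\<in>monoms_in S. ord m m) \<and>
     (\<forall>m\<in>monoms_in S. \<forall>m'\<in>monoms_in S. ord m m' \<and> ord m' m \<longrightarrow> m = m') \<and>
     (\<forall>m1\<in>monoms_in S. \<forall>m2\<in>monoms_in S. \<forall>m3\<in>monoms_in S.
         ord m1 m2 \<and> ord m2 m3 \<longrightarrow> ord m1 m3) \<and>
     (\<forall>m\<in>monoms_in S. \<forall>m'\<in>monoms_in S. ord m m' \<or> ord m' m) \<and>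
     wf {(m, m'). m \<in> monoms_in S \<and> m' \<in> monoms_in S \<and> ord m m' \<and> m \<noteq> m'} \<and>
     (\<forall>m\<in>monoms_in S. \<forall>m'\<in>monoms_in S. \<forall>u\<in>monoms_in S. ord m m' \<longrightarrow> ord (m + u) (m' + u))"

text \<open>Leading monomial and leading coefficient (for nonzero p).\<close>
definition lm :: "(monom \<Rightarrow> monom \<Rightarrow> bool) \<Rightarrow> mpoly \<Rightarrow> monom" where
  "lm ord p = (THE m. m \<in> Poly_Mapping.keys p \<and> (\<forall>m'\<in>Poly_Mapping.keys p. ord m' m))"

definition lc :: "(monom \<Rightarrow> monom \<Rightarrow> bool) \<Rightarrow> mpoly \<Rightarrow> complex" where
  "lc ord p = Poly_Mapping.lookup p (lm ord p)"

definition groebner_basis :: "(monom \<Rightarrow> monom \<Rightarrow> bool) \<Rightarrow> mpoly set \<Rightarrow> mpoly set \<Rightarrow> bool" where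
  "groebner_basis ord I G \<longleftrightarrow> finite G \<and> G \<subseteq> I \<and>
     (\<forall>p\<in>I. p \<noteq> 0 \<longrightarrow> (\<exists>g\<in>G. g \<noteq> 0 \<and> mdvd (lm ord g) (lm ord p)))"

definition reduced_groebner_basis :: "(monom \<Rightarrow> monom \<Rightarrow> bool) \<Rightarrow> mpoly set \<Rightarrow> mpoly set \<Rightarrow> bool" where
  "reduced_groebner_basis ord I G \<longleftrightarrow> groebner_basis ord I G \<and> 0 \<notin> G \<and>
     (\<forall>g\<in>G. lc ord g = 1) \<and>
     (\<forall>g\<in>G. \<forall>g'\<in>G - {g}. \<forall>m\<in>Poly_Mapping.keys g. \<not> mdvd (lm ord g') m)"

definition universal_groebner_basis :: "nat set \<Rightarrow> mpoly set \<Rightarrow> mpoly set" where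
  "universal_groebner_basis S I =
     \<Union> {G. \<exists>ord. monomial_order S ord \<and> reduced_groebner_basis ord I G}"

text \<open>Toric ideal of the monomial map t_k |-> x^(A k) (A k :: nat \<Rightarrow> nat the exponent vector of
  column k) on the polynomial ring in the variables S: the kernel, i.e. the polynomials whose
  image has all coefficients zero.\<close>
definition image_exp :: "(nat \<Rightarrow> nat \<Rightarrow> nat) \<Rightarrow> monom \<Rightarrow> (nat \<Rightarrow> nat)" where
  "image_exp A m = (\<lambda>j. \<Sum>k\<in>Poly_Mapping.keys m. Poly_Mapping.lookup m k * A k j)"

definition toric_ideal :: "nat set \<Rightarrow> (nat \<Rightarrow> nat \<Rightarrow> nat) \<Rightarrow> mpoly set" where
  "toric_ideal S A = {p \<in> polys_in S.
      \<forall>e. (\<Sum>m\<in>{m \<in> Poly_Mapping.keys p. image_exp A m = e}. Poly_Mapping.lookup p m) = 0}"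

text \<open>The columns m_k (k = 1..3n+1) of M_n as 0/1 exponent vectors in x_1..x_{2n+1}.\<close>
definition P2_support :: "nat \<Rightarrow> nat \<Rightarrow> nat set" where
  "P2_support n k =
     (if k = 3*n + 1 then {2*n + 1}
      else (let i = (k - 1) div 3; r = (k - 1) mod 3 in
            if r = 0 then {2*i + 1, 2*n + 1}
            else if r = 1 then {2*i + 1, 2*i + 2, 2*n + 1}
            else {2*i + 2, 2*n + 1}))"

definition P2_matrix :: "nat \<Rightarrow> nat \<Rightarrow> nat \<Rightarrow> nat" where
  "P2_matrix n k j = (if j \<in> P2_support n k then 1 else 0)"

definition V'_set :: "nat \<Rightarrow> mpoly set" where
  "V'_set n = {var (3*i+1) * var (3*i+3) - var (3*i+2) * var (3*n+1) | i. i < n}"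

definition V''_set :: "nat \<Rightarrow> mpoly set" where
  "V''_set n = {var (3*i+1) * var (3*i+3) * var (3*j+2) - var (3*j+1) * var (3*j+3) * var (3*i+2)
                 | i j. i < j \<and> j \<le> n - 1}"

text \<open>Closure under sign: Groebner basis elements are determined up to a scalar (here a sign).\<close>
definition pm_closure :: "mpoly set \<Rightarrow> mpoly set" where
  "pm_closure G = G \<union> uminus ` G"

end

theory Submission
  imports Defs
begin



abbreviation X :: "nat \<Rightarrow> monom" where "X k \<equiv> Poly_Mapping.single k 1"

definition binom :: "monom \<Rightarrow> monom \<Rightarrow> mpoly" where
  "binom p q = Poly_Mapping.single p 1 - Poly_Mapping.single q 1"

definition Pairs :: "nat \<Rightarrow> (monom \<times> monom) set" where
 "Pairs n = {(X (3*i+1) + X (3*i+3), X (3*i+2) + X (3*n+1)) | i. i < n}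
   \<union> {(X (3*i+2) + X (3*n+1), X (3*i+1) + X (3*i+3)) | i. i < n}
   \<union> {(X (3*i+1) + X (3*i+3) + X (3*j+2), X (3*j+1) + X (3*j+3) + X (3*i+2)) | i j. i < n \<and> j < n \<and> i \<noteq> j}"

lemma var_mult: "var a * var b = Poly_Mapping.single (X a + X b) 1"
  by (simp add: var_def mult_single)
lemma var_mult3: "var a * var b * var c = Poly_Mapping.single (X a + X b + X c) 1"
  by (simp add: var_def mult_single)

lemma binom_swap: "- binom p q = binom q p" by (simp add: binom_def)

lemma Pairs_swap: "(p,q) \<in> Pairs n \<Longrightarrow> (q,p) \<in> Pairs n"
  unfolding Pairs_def by blast

lemma neg_binom: "-v = binom p q \<Longrightarrow> v = binom q p"
  by (metis binom_swap minus_minus)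

lemma img_Pairs: "v = binom p q \<Longrightarrow> (p,q) \<in> Pairs n \<Longrightarrow> v \<in> (\<lambda>(p,q). binom p q) ` Pairs n"
  using rev_image_eqI[of "(p,q)" "Pairs n" v "\<lambda>(p,q). binom p q"] by simp

lemma V'_mem: "i < n \<Longrightarrow> binom (X (3*i+1) + X (3*i+3)) (X (3*i+2) + X (3*n+1)) \<in> V'_set n"
proof -
  assume "i < n"
  then have "var (3*i+1) * var (3*i+3) - var (3*i+2) * var (3*n+1) \<in> V'_set n"
    unfolding V'_set_def by blast
  then show ?thesis by (simp only: var_mult binom_def)
qed

lemma V''_mem: "i < j \<Longrightarrow> j < n \<Longrightarrow>
   binom (X (3*i+1) + X (3*i+3) + X (3*j+2)) (X (3*j+1) + X (3*j+3) + X (3*i+2)) \<in> V''_set n"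
proof -
  assume "i < j" "j < n"
  then have "var (3*i+1) * var (3*i+3) * var (3*j+2) - var (3*j+1) * var (3*j+3) * var (3*i+2) \<in> V''_set n"
    unfolding V''_set_def by fastforce
  then show ?thesis by (simp only: var_mult3 binom_def)
qed

lemma V'_cases: "v \<in> V'_set n \<Longrightarrow> \<exists>i<n. v = binom (X (3*i+1) + X (3*i+3)) (X (3*i+2) + X (3*n+1))"
  unfolding V'_set_def by (auto simp only: var_mult binom_def)

lemma V''_cases: "v \<in> V''_set n \<Longrightarrow> \<exists>i j. i < j \<and> j \<le> n - 1 \<and>
   v = binom (X (3*i+1) + X (3*i+3) + X (3*j+2)) (X (3*j+1) + X (3*j+3) + X (3*i+2))"
  unfolding V''_set_def by (auto simp only: var_mult3 binom_def)

lemma Pairs_cases: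
  assumes "(p,q) \<in> Pairs n"
  obtains (a) i where "i < n" "p = X (3*i+1) + X (3*i+3)" "q = X (3*i+2) + X (3*n+1)"
      | (b) i where "i < n" "p = X (3*i+2) + X (3*n+1)" "q = X (3*i+1) + X (3*i+3)"
      | (c) i j where "i < n" "j < n" "i \<noteq> j" "p = X (3*i+1) + X (3*i+3) + X (3*j+2)" "q = X (3*j+1) + X (3*j+3) + X (3*i+2)"
  using assms unfolding Pairs_def by blast

lemma Pairs_a: "i < n \<Longrightarrow> (X (3*i+1) + X (3*i+3), X (3*i+2) + X (3*n+1)) \<in> Pairs n"
  unfolding Pairs_def by blast
lemma Pairs_b: "i < n \<Longrightarrow> (X (3*i+2) + X (3*n+1), X (3*i+1) + X (3*i+3)) \<in> Pairs n"
  unfolding Pairs_def by blast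
lemma Pairs_c: "i < n \<Longrightarrow> j < n \<Longrightarrow> i \<noteq> j \<Longrightarrow>
   (X (3*i+1) + X (3*i+3) + X (3*j+2), X (3*j+1) + X (3*j+3) + X (3*i+2)) \<in> Pairs n"
  unfolding Pairs_def by blast

lemma pm_closure_V:
  assumes "n \<ge> 1"
  shows "pm_closure (V'_set n \<union> V''_set n) = (\<lambda>(p,q). binom p q) ` Pairs n"
proof
  show "pm_closure (V'_set n \<union> V''_set n) \<subseteq> (\<lambda>(p,q). binom p q) ` Pairs n"
  proof
    fix v assume "v \<in> pm_closure (V'_set n \<union> V''_set n)"
    then consider (a) "v \<in> V'_set n" | (b) "v \<in> V''_set n" | (c) "-v \<in> V'_set n" | (d) "-v \<in> V''_set n"
      unfolding pm_closure_def by (auto simp: image_iff)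
    then show "v \<in> (\<lambda>(p,q). binom p q) ` Pairs n"
    proof cases
      case a
      then obtain i where "i < n" "v = binom (X (3*i+1) + X (3*i+3)) (X (3*i+2) + X (3*n+1))"
        using V'_cases by blast
      then show ?thesis using Pairs_a img_Pairs by blast
    next
      case c
      then obtain i where "i < n" and h: "-v = binom (X (3*i+1) + X (3*i+3)) (X (3*i+2) + X (3*n+1))"
        using V'_cases by blast
      from h have "v = binom (X (3*i+2) + X (3*n+1)) (X (3*i+1) + X (3*i+3))"
        by (rule neg_binom)
      then show ?thesis using \<open>i < n\<close> Pairs_b img_Pairs by blast
    next
      case b
      then obtain i j where "i < j" "j \<le> n - 1" "v = binom (X (3*i+1) + X (3*i+3) + X (3*j+2)) (X (3*j+1) + X (3*j+3) + X (3*i+2))"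
        using V''_cases by blast
      moreover have "i < n" "j < n" "i \<noteq> j" using assms \<open>i < j\<close> \<open>j \<le> n - 1\<close> by auto
      ultimately show ?thesis using Pairs_c img_Pairs by blast
    next
      case d
      then obtain i j where "i < j" "j \<le> n - 1" and h: "-v = binom (X (3*i+1) + X (3*i+3) + X (3*j+2)) (X (3*j+1) + X (3*j+3) + X (3*i+2))"
        using V''_cases by blast
      from h have "v = binom (X (3*j+1) + X (3*j+3) + X (3*i+2)) (X (3*i+1) + X (3*i+3) + X (3*j+2))"
        by (rule neg_binom)
      moreover have "i < n" "j < n" "j \<noteq> i" using assms \<open>i < j\<close> \<open>j \<le> n - 1\<close> by auto
      ultimately show ?thesis using Pairs_c img_Pairs by blast
    qed
  qed
next
  show "(\<lambda>(p,q). binom p q) ` Pairs n \<subseteq> pm_closure (V'_set n \<union> V''_set n)"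
  proof
    fix v assume "v \<in> (\<lambda>(p,q). binom p q) ` Pairs n"
    then obtain p q where pq: "(p,q) \<in> Pairs n" "v = binom p q" by auto
    from pq(1) show "v \<in> pm_closure (V'_set n \<union> V''_set n)"
    proof (cases rule: Pairs_cases)
      case (a i)
      then have "v \<in> V'_set n" using V'_mem pq(2) by simp
      then show ?thesis unfolding pm_closure_def by blast
    next
      case (b i)
      then have "-v \<in> V'_set n" using V'_mem pq(2) binom_swap by metis
      then show ?thesis unfolding pm_closure_def by (metis UnI1 UnI2 image_eqI minus_minus)
    next
      case (c i j)
      show ?thesis
      proof (cases "i < j")
        case True
        then have "v \<in> V''_set n" using c V''_mem pq(2) by simp
        then show ?thesis unfolding pm_closure_def by blast
      next
        case False
        then have "j < i" using c by auto
        then have "-v \<in> V''_set n" using c V''_mem[of j i n] pq(2) binom_swap by metis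
        then show ?thesis unfolding pm_closure_def by (metis UnI1 UnI2 image_eqI minus_minus)
      qed
    qed
  qed
qed


abbreviation keys :: "('a \<Rightarrow>\<^sub>0 'b::zero) \<Rightarrow> 'a set" where "keys \<equiv> Poly_Mapping.keys"
abbreviation lookup :: "('a \<Rightarrow>\<^sub>0 'b::zero) \<Rightarrow> 'a \<Rightarrow> 'b" where "lookup \<equiv> Poly_Mapping.lookup"


lemma monoms_add:
  assumes "a \<in> monoms_in S" "b \<in> monoms_in S" shows "a + b \<in> monoms_in S"
proof -
  have "keys (a + b) \<subseteq> keys a \<union> keys b" by (rule keys_add)
  moreover have "keys a \<subseteq> S" "keys b \<subseteq> S" using assms by (simp_all add: monoms_in_def)
  ultimately have "keys (a + b) \<subseteq> S" by blast
  then show ?thesis by (simp add: monoms_in_def)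
qed

lemma monoms_diff: "a \<in> monoms_in S \<Longrightarrow> a - b \<in> monoms_in S"
  unfolding monoms_in_def by (auto simp: in_keys_iff lookup_minus)

lemma monoms_zero: "0 \<in> monoms_in S"
  unfolding monoms_in_def by simp

lemma mdvd_diff_add: "mdvd a b \<Longrightarrow> b - a + a = b"
  by (rule poly_mapping_eqI) (simp add: mdvd_def lookup_add lookup_minus)

lemma mdvd_antisym: "mdvd a b \<Longrightarrow> mdvd b a \<Longrightarrow> a = b"
  by (rule poly_mapping_eqI) (simp add: mdvd_def order_antisym)

lemma mdvd_trans: "mdvd a b \<Longrightarrow> mdvd b c \<Longrightarrow> mdvd a c"
  unfolding mdvd_def using order_trans by blast

lemma mdvd_refl: "mdvd a a"
  unfolding mdvd_def by simp

lemma mdvd_add_right: "mdvd a (a + b)"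
  unfolding mdvd_def by (simp add: lookup_add)

lemma mdvd_add_left: "mdvd a (b + a)"
  unfolding mdvd_def by (simp add: lookup_add)

lemma mdvd_diff: "mdvd (a - b) a"
  unfolding mdvd_def by (simp add: lookup_minus)

locale mono_ord =
  fixes S :: "nat set" and ord :: "monom \<Rightarrow> monom \<Rightarrow> bool"
  assumes mo: "monomial_order S ord"
begin

abbreviation "M \<equiv> monoms_in S"

lemma refl: "m \<in> M \<Longrightarrow> ord m m"
  using mo unfolding monomial_order_def by blast
lemma antisym: "m \<in> M \<Longrightarrow> m' \<in> M \<Longrightarrow> ord m m' \<Longrightarrow> ord m' m \<Longrightarrow> m = m'"
  using mo unfolding monomial_order_def by blast
lemma trans: "m1 \<in> M \<Longrightarrow> m2 \<in> M \<Longrightarrow> m3 \<in> M \<Longrightarrow> ord m1 m2 \<Longrightarrow> ord m2 m3 \<Longrightarrow> ord m1 m3"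
  using mo unfolding monomial_order_def by blast
lemma total: "m \<in> M \<Longrightarrow> m' \<in> M \<Longrightarrow> ord m m' \<or> ord m' m"
  using mo unfolding monomial_order_def by blast
lemma compat: "m \<in> M \<Longrightarrow> m' \<in> M \<Longrightarrow> u \<in> M \<Longrightarrow> ord m m' \<Longrightarrow> ord (m + u) (m' + u)"
  using mo unfolding monomial_order_def by blast
lemma wf_ord: "wf {(m, m'). m \<in> M \<and> m' \<in> M \<and> ord m m' \<and> m \<noteq> m'}"
  using mo unfolding monomial_order_def by blast

lemma zero_min:
  assumes u: "u \<in> M" shows "ord 0 u"
proof (rule ccontr)
  assume nz: "\<not> ord 0 u"
  then have uo: "ord u 0" using total[OF u monoms_zero] by blast
  have "u \<noteq> 0" using nz refl[OF monoms_zero] by auto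
  define f where "f i = ((\<lambda>x. x + u) ^^ i) 0" for i
  have fM: "f i \<in> M" for i
    by (induction i) (auto simp: f_def monoms_zero monoms_add u)
  have "(f (Suc i), f i) \<in> {(m, m'). m \<in> M \<and> m' \<in> M \<and> ord m m' \<and> m \<noteq> m'}" for i
  proof -
    have fs: "f (Suc i) = f i + u" by (simp add: f_def)
    have "ord (u + f i) (0 + f i)" by (rule compat[OF u monoms_zero fM uo])
    then have "ord (f (Suc i)) (f i)" by (simp add: fs add.commute)
    moreover have "f (Suc i) \<noteq> f i" using \<open>u \<noteq> 0\<close> fs
      by (metis add_cancel_right_right)
    ultimately show ?thesis using fM by blast
  qed
  then show False using wf_ord unfolding wf_iff_no_infinite_down_chain by blast
qed

lemma dvd_ord:
  assumes "a \<in> M" "b \<in> M" "mdvd a b" shows "ord a b"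
proof -
  have "ord (0 + a) ((b - a) + a)"
    by (rule compat[OF monoms_zero monoms_diff[OF assms(2)] assms(1) zero_min[OF monoms_diff[OF assms(2)]]])
  then show ?thesis using mdvd_diff_add[OF assms(3)] by simp
qed

lemma cancel:
  assumes "a \<in> M" "b \<in> M" "w \<in> M" "ord (a + w) (b + w)" shows "ord a b"
proof (rule ccontr)
  assume "\<not> ord a b"
  then have "ord b a" using total assms by blast
  then have "ord (b + w) (a + w)" using compat assms by blast
  then have "a + w = b + w" using antisym assms monoms_add by blast
  then have "a = b" by simp
  then show False using \<open>\<not> ord a b\<close> refl assms by blast
qed

lemma lm_exists:
  assumes "p \<noteq> 0" "keys p \<subseteq> M"
  shows "\<exists>m\<in>keys p. \<forall>m'\<in>keys p. ord m' m"
proof -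
  have "finite (keys p)" "keys p \<noteq> {}" using assms by auto
  then show ?thesis using assms(2)
  proof (induction rule: finite_ne_induct)
    case (singleton x)
    then show ?case using refl by auto
  next
    case (insert x F)
    then obtain m where m: "m \<in> F" "\<forall>m'\<in>F. ord m' m" by auto
    show ?case
    proof (cases "ord x m")
      case True
      then show ?thesis using m by auto
    next
      case False
      then have "ord m x" using total insert m by blast
      then show ?thesis using m insert trans by (metis insertI1 insert_iff insert_subset subsetD refl)
    qed
  qed
qed

lemma lm_unique:
  assumes "keys p \<subseteq> M" "m \<in> keys p" "\<forall>m'\<in>keys p. ord m' m"
  shows "lm ord p = m"
  unfolding lm_def
proof (rule the_equality)
  show "m \<in> keys p \<and> (\<forall>m'\<in>keys p. ord m' m)" using assms by blast
next
  fix m' assume "m' \<in> keys p \<and> (\<forall>m''\<in>keys p. ord m'' m')"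
  then show "m' = m" using assms antisym by blast
qed

lemma lm_prop:
  assumes "p \<noteq> 0" "keys p \<subseteq> M"
  shows "lm ord p \<in> keys p" "\<forall>m'\<in>keys p. ord m' (lm ord p)"
  using lm_exists[OF assms] lm_unique[OF assms(2)] by metis+

lemma keys_binom: "p \<noteq> q \<Longrightarrow> keys (binom p q) = {p, q}"
  unfolding binom_def
  by (auto simp: in_keys_iff lookup_minus lookup_single)

lemma lm_binom:
  assumes "p \<noteq> q" "p \<in> M" "q \<in> M" "ord q p"
  shows "lm ord (binom p q) = p" "lc ord (binom p q) = 1"
proof -
  show 1: "lm ord (binom p q) = p"
    by (rule lm_unique) (use assms keys_binom[OF assms(1)] refl in auto)
  show "lc ord (binom p q) = 1"
    unfolding lc_def 1 using assms(1) by (simp add: binom_def lookup_minus lookup_single)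
qed

end

lemma binom_neq0: "p \<noteq> q \<Longrightarrow> binom p q \<noteq> 0"
  unfolding binom_def
  by (metis add_0 diff_add_cancel lookup_single_eq lookup_single_not_eq lookup_zero one_neq_zero)

lemma binom_inj: "p \<noteq> q \<Longrightarrow> binom p q = binom p' q' \<Longrightarrow> p = p' \<and> q = q'"
proof -
  assume pq: "p \<noteq> q" and e: "binom p q = binom p' q'"
  have l: "lookup (binom a b) m = (if m = a then 1 else 0) - (if m = b then 1 else 0)" for a b m
    unfolding binom_def by (simp add: lookup_minus lookup_single)
  have "lookup (binom p' q') p = 1" using e l[of p q p] pq by simp
  then have "p' = p" "q' \<noteq> p" using l[of p' q' p] by (auto split: if_splits)
  moreover have "lookup (binom p' q') q = -1" using e l[of p q q] pq by simp
  then have "q' = q" using l[of p' q' q] by (auto split: if_splits)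
  ultimately show ?thesis by simp
qed


definition img :: "nat \<Rightarrow> monom \<Rightarrow> nat \<Rightarrow> nat" where
  "img n m j = (\<Sum>k\<in>{1..3*n+1}. lookup m k * P2_matrix n k j)"

lemma image_eq:
  assumes "m \<in> monoms_in {1..3*n+1}"
  shows "image_exp (P2_matrix n) m = img n m"
proof
  fix j
  have "keys m \<subseteq> {1..3*n+1}" using assms by (simp add: monoms_in_def)
  then show "image_exp (P2_matrix n) m j = img n m j"
    unfolding image_exp_def img_def
    by (intro sum.mono_neutral_left) (auto simp: in_keys_iff)
qed

lemma img_add: "img n (a + b) j = img n a j + img n b j"
  by (simp add: img_def lookup_add sum.distrib distrib_right)

lemma img_X: "k \<in> {1..3*n+1} \<Longrightarrow> img n (X k) = P2_matrix n k"
proof (rule ext)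
  fix j assume k: "k \<in> {1..3*n+1}"
  have "img n (X k) j = (\<Sum>k'\<in>{1..3*n+1}. if k = k' then P2_matrix n k' j else 0)"
    unfolding img_def by (intro sum.cong) (auto simp: lookup_single)
  also have "\<dots> = P2_matrix n k j" using k by (simp add: sum.delta)
  finally show "img n (X k) j = P2_matrix n k j" .
qed

lemma supp1: "i < n \<Longrightarrow> P2_support n (3*i+1) = {2*i+1, 2*n+1}"
  unfolding P2_support_def Let_def by simp
lemma c1: "(3*i+1) div 3 = (i::nat)" by presburger
lemma c2: "(3*i+1) mod 3 = (1::nat)" by presburger
lemma c3: "(3*i+2) div 3 = (i::nat)" by presburger
lemma c4: "(3*i+2) mod 3 = (2::nat)" by presburger
lemma a2: "3*i+2 \<noteq> 3*(n::nat)+1" by presburger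
lemma a3: "3*i+3 \<noteq> 3*(n::nat)+1" by presburger
lemma supp2: "i < n \<Longrightarrow> P2_support n (3*i+2) = {2*i+1, 2*i+2, 2*n+1}"
proof -
  have b: "3*i+2-1 = 3*i+1" by simp
  show ?thesis unfolding P2_support_def Let_def b c1 c2 using a2[of i n] by simp
qed
lemma supp3: "i < n \<Longrightarrow> P2_support n (3*i+3) = {2*i+2, 2*n+1}"
proof -
  have b: "3*i+3-1 = 3*i+2" by simp
  show ?thesis unfolding P2_support_def Let_def b c3 c4 using a3[of i n] by simp
qed
lemma supp4: "P2_support n (3*n+1) = {2*n+1}"
  unfolding P2_support_def by simp

lemma sum_blocks:
  fixes f :: "nat \<Rightarrow> nat" and m :: nat
  shows "(\<Sum>k\<in>{1..3*m+1}. f k) = (\<Sum>i<m. f (3*i+1) + f (3*i+2) + f (3*i+3)) + f (3*m+1)"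
proof (induction m)
  case 0
  then show ?case by simp
next
  case (Suc m)
  have e: "{1..3*m+4} = insert (3*m+4) (insert (3*m+3) (insert (3*m+2) {1..3*m+1}))"
    by auto
  have A: "(\<Sum>k\<in>{1..3*m+4}. f k) = f (3*m+4) + (f (3*m+3) + (f (3*m+2) + (\<Sum>k\<in>{1..3*m+1}. f k)))"
  proof -
    have n1: "3*m+4 \<notin> insert (3*m+3) (insert (3*m+2) {1..3*m+1})" by auto
    have n2: "3*m+3 \<notin> insert (3*m+2) {1..3*m+1}" by auto
    have n3: "3*m+2 \<notin> {1..3*m+1}" by auto
    show ?thesis unfolding e
      by (simp only: sum.insert[OF _ n1] sum.insert[OF _ n2] sum.insert[OF _ n3] finite_insert finite_atLeastAtMost)
  qed
  have B: "(\<Sum>i<Suc m. f (3*i+1) + f (3*i+2) + f (3*i+3)) = (\<Sum>i<m. f (3*i+1) + f (3*i+2) + f (3*i+3)) + (f (3*m+1) + f (3*m+2) + f (3*m+3))"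
    by (rule sum.lessThan_Suc)
  have C: "3 * Suc m + 1 = 3*m+4" by simp
  show ?case unfolding C A B using Suc.IH by linarith
qed

definition blk :: "monom \<Rightarrow> nat \<Rightarrow> nat" where
  "blk m i = lookup m (3*i+1) + lookup m (3*i+2) + lookup m (3*i+3)"

lemma img_top: "img n m (2*n+1) = (\<Sum>i<n. blk m i) + lookup m (3*n+1)"
proof -
  have "img n m (2*n+1) = (\<Sum>k\<in>{1..3*n+1}. lookup m k)"
    unfolding img_def
  proof (intro sum.cong refl)
    fix k assume k: "k \<in> {1..3*n+1}"
    have "2*n+1 \<in> P2_support n k"
    proof (cases "k = 3*n+1")
      case True then show ?thesis unfolding True supp4 by simp
    next
      case False
      then have "k \<le> 3*n" "k \<ge> 1" using k by auto
      define i where "i = (k-1) div 3"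
      have i: "i < n" unfolding i_def using \<open>k \<le> 3*n\<close> \<open>k \<ge> 1\<close> by presburger
      have "k = 3*i+1 \<or> k = 3*i+2 \<or> k = 3*i+3" unfolding i_def using \<open>k \<ge> 1\<close> by presburger
      then show ?thesis using supp1[OF i] supp2[OF i] supp3[OF i] by auto
    qed
    then show "lookup m k * P2_matrix n k (2*n+1) = lookup m k" by (simp add: P2_matrix_def)
  qed
  also have "\<dots> = (\<Sum>i<n. blk m i) + lookup m (3*n+1)"
    unfolding blk_def by (rule sum_blocks)
  finally show ?thesis .
qed

lemma img_odd:
  assumes i: "i < n"
  shows "img n m (2*i+1) = lookup m (3*i+1) + lookup m (3*i+2)"
proof -
  define f where "f k = lookup m k * P2_matrix n k (2*i+1)" for k
  have "img n m (2*i+1) = (\<Sum>k\<in>{1..3*n+1}. f k)" unfolding img_def f_def by simp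
  also have "\<dots> = (\<Sum>i'<n. f (3*i'+1) + f (3*i'+2) + f (3*i'+3)) + f (3*n+1)"
    by (rule sum_blocks)
  also have "f (3*n+1) = 0" unfolding f_def P2_matrix_def supp4 using i by simp
  also have "(\<Sum>i'<n. f (3*i'+1) + f (3*i'+2) + f (3*i'+3))
       = (\<Sum>i'<n. if i' = i then lookup m (3*i+1) + lookup m (3*i+2) else 0)"
  proof (rule sum.cong[OF refl])
    fix i' assume "i' \<in> {..<n}"
    then have i': "i' < n" by simp
    show "f (3*i'+1) + f (3*i'+2) + f (3*i'+3) = (if i' = i then lookup m (3*i+1) + lookup m (3*i+2) else 0)"
      unfolding f_def P2_matrix_def supp1[OF i'] supp2[OF i'] supp3[OF i'] using i i' by auto
  qed
  also have "\<dots> = lookup m (3*i+1) + lookup m (3*i+2)" using i by simp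
  finally show ?thesis by simp
qed

lemma img_even:
  assumes i: "i < n"
  shows "img n m (2*i+2) = lookup m (3*i+2) + lookup m (3*i+3)"
proof -
  define f where "f k = lookup m k * P2_matrix n k (2*i+2)" for k
  have "img n m (2*i+2) = (\<Sum>k\<in>{1..3*n+1}. f k)" unfolding img_def f_def by simp
  also have "\<dots> = (\<Sum>i'<n. f (3*i'+1) + f (3*i'+2) + f (3*i'+3)) + f (3*n+1)"
    by (rule sum_blocks)
  also have "f (3*n+1) = 0" unfolding f_def P2_matrix_def supp4 using i by simp
  also have "(\<Sum>i'<n. f (3*i'+1) + f (3*i'+2) + f (3*i'+3))
       = (\<Sum>i'<n. if i' = i then lookup m (3*i+2) + lookup m (3*i+3) else 0)"
  proof (rule sum.cong[OF refl])
    fix i' assume "i' \<in> {..<n}"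
    then have i': "i' < n" by simp
    show "f (3*i'+1) + f (3*i'+2) + f (3*i'+3) = (if i' = i then lookup m (3*i+2) + lookup m (3*i+3) else 0)"
      unfolding f_def P2_matrix_def supp1[OF i'] supp2[OF i'] supp3[OF i'] using i i' by auto
  qed
  also have "\<dots> = lookup m (3*i+2) + lookup m (3*i+3)" using i by simp
  finally show ?thesis by simp
qed


definition ia :: "nat \<Rightarrow> nat" where "ia i = 3*i+1"
definition ib :: "nat \<Rightarrow> nat" where "ib i = 3*i+2"
definition ic :: "nat \<Rightarrow> nat" where "ic i = 3*i+3"

lemma idx_simps [simp]:
  "ia i = ia j \<longleftrightarrow> i = j" "ib i = ib j \<longleftrightarrow> i = j" "ic i = ic j \<longleftrightarrow> i = j"
  "ia i \<noteq> ib j" "ib j \<noteq> ia i" "ia i \<noteq> ic j" "ic j \<noteq> ia i" "ib i \<noteq> ic j" "ic j \<noteq> ib i"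
  unfolding ia_def ib_def ic_def by presburger+

lemma idx_range:
  "i \<le> n \<Longrightarrow> ia i \<in> {1..3*n+1}" "i < n \<Longrightarrow> ib i \<in> {1..3*n+1}" "i < n \<Longrightarrow> ic i \<in> {1..3*n+1}"
  unfolding ia_def ib_def ic_def by auto

lemma idx_decomp:
  assumes "k \<in> {1..3*n+1}"
  shows "k = ia n \<or> (\<exists>i<n. k = ia i \<or> k = ib i \<or> k = ic i)"
proof (cases "k = 3*n+1")
  case True then show ?thesis by (simp add: ia_def)
next
  case False
  then have "k \<le> 3*n" "k \<ge> 1" using assms by auto
  define i where "i = (k-1) div 3"
  have i: "i < n" unfolding i_def using \<open>k \<le> 3*n\<close> \<open>k \<ge> 1\<close> by presburger
  have "k = 3*i+1 \<or> k = 3*i+2 \<or> k = 3*i+3" unfolding i_def using \<open>k \<ge> 1\<close> by presburger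
  then show ?thesis using i unfolding ia_def ib_def ic_def by blast
qed

lemma lX: "lookup (X a) k = (if a = k then 1 else 0)"
  by (simp add: lookup_single)

lemma Pairs_cases2:
  assumes "(p,q) \<in> Pairs n"
  obtains (a) i where "i < n" "p = X (ia i) + X (ic i)" "q = X (ib i) + X (ia n)"
      | (b) i where "i < n" "p = X (ib i) + X (ia n)" "q = X (ia i) + X (ic i)"
      | (c) i j where "i < n" "j < n" "i \<noteq> j" "p = X (ia i) + X (ic i) + X (ib j)" "q = X (ia j) + X (ic j) + X (ib i)"
  using assms unfolding ia_def ib_def ic_def by (cases rule: Pairs_cases) blast+

lemma Pairs_a2: "i < n \<Longrightarrow> (X (ia i) + X (ic i), X (ib i) + X (ia n)) \<in> Pairs n"
  unfolding ia_def ib_def ic_def by (rule Pairs_a)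
lemma Pairs_b2: "i < n \<Longrightarrow> (X (ib i) + X (ia n), X (ia i) + X (ic i)) \<in> Pairs n"
  unfolding ia_def ib_def ic_def by (rule Pairs_b)
lemma Pairs_c2: "i < n \<Longrightarrow> j < n \<Longrightarrow> i \<noteq> j \<Longrightarrow>
   (X (ia i) + X (ic i) + X (ib j), X (ia j) + X (ic j) + X (ib i)) \<in> Pairs n"
  unfolding ia_def ib_def ic_def by (rule Pairs_c)

lemma supp_ia: "i < n \<Longrightarrow> P2_support n (ia i) = {2*i+1, 2*n+1}"
  unfolding ia_def by (rule supp1)
lemma supp_ib: "i < n \<Longrightarrow> P2_support n (ib i) = {2*i+1, 2*i+2, 2*n+1}"
  unfolding ib_def by (rule supp2)
lemma supp_ic: "i < n \<Longrightarrow> P2_support n (ic i) = {2*i+2, 2*n+1}"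
  unfolding ic_def by (rule supp3)
lemma supp_d: "P2_support n (ia n) = {2*n+1}"
  unfolding ia_def by (rule supp4)

lemma monoms_X: "a \<in> S \<Longrightarrow> Poly_Mapping.single a c \<in> monoms_in S"
  unfolding monoms_in_def by simp

lemma monoms_S:
  "i < n \<Longrightarrow> X (ia i) \<in> monoms_in {1..3*n+1}"
  "i < n \<Longrightarrow> X (ib i) \<in> monoms_in {1..3*n+1}"
  "i < n \<Longrightarrow> X (ic i) \<in> monoms_in {1..3*n+1}"
  "X (ia n) \<in> monoms_in {1..3*n+1}"
  by (rule monoms_X, rule idx_range, simp)+

lemma img_single: "k \<in> {1..3*n+1} \<Longrightarrow> img n (Poly_Mapping.single k c) j = c * P2_matrix n k j"
proof -
  assume k: "k \<in> {1..3*n+1}"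
  have "img n (Poly_Mapping.single k c) j = (\<Sum>k'\<in>{1..3*n+1}. if k = k' then c * P2_matrix n k' j else 0)"
    unfolding img_def by (intro sum.cong) (auto simp: lookup_single)
  also have "\<dots> = c * P2_matrix n k j" using k by (simp add: sum.delta)
  finally show ?thesis .
qed

lemma img_idx:
  "i < n \<Longrightarrow> img n (Poly_Mapping.single (ia i) c) j = c * P2_matrix n (ia i) j"
  "i < n \<Longrightarrow> img n (Poly_Mapping.single (ib i) c) j = c * P2_matrix n (ib i) j"
  "i < n \<Longrightarrow> img n (Poly_Mapping.single (ic i) c) j = c * P2_matrix n (ic i) j"
  "img n (Poly_Mapping.single (ia n) c) j = c * P2_matrix n (ia n) j"
  by (rule img_single, rule idx_range, simp)+

lemma Pairs_props0:
  assumes "(p,q) \<in> Pairs n"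
  shows "p \<noteq> q \<and> p \<noteq> 0 \<and> p \<in> monoms_in {1..3*n+1} \<and> q \<in> monoms_in {1..3*n+1} \<and> (\<forall>j. img n p j = img n q j)"
  using assms
proof (cases rule: Pairs_cases2)
  case (a i)
  have "lookup p (ia i) = 1" "lookup q (ia i) = 0" using a by (simp_all add: lookup_add lookup_single)
  moreover have "p \<in> monoms_in {1..3*n+1}" "q \<in> monoms_in {1..3*n+1}"
    unfolding a(2) a(3) by (intro monoms_add monoms_S a(1))+
  moreover have "img n p j = img n q j" for j using a
    by (simp add: img_add img_idx P2_matrix_def supp_ia supp_ib supp_ic supp_d)
  ultimately show ?thesis by auto
next
  case (b i)
  have "lookup p (ib i) = 1" "lookup q (ib i) = 0" using b by (simp_all add: lookup_add lookup_single)
  moreover have "p \<in> monoms_in {1..3*n+1}" "q \<in> monoms_in {1..3*n+1}"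
    unfolding b(2) b(3) by (intro monoms_add monoms_S b(1))+
  moreover have "img n p j = img n q j" for j using b
    by (simp add: img_add img_idx P2_matrix_def supp_ia supp_ib supp_ic supp_d)
  ultimately show ?thesis by auto
next
  case (c i k)
  have "lookup p (ia i) = 1" "lookup q (ia i) = 0" using c by (simp_all add: lookup_add lookup_single)
  moreover have "p \<in> monoms_in {1..3*n+1}" "q \<in> monoms_in {1..3*n+1}"
    unfolding c(4) c(5) by (intro monoms_add monoms_S c(1) c(2))+
  moreover have "img n p j = img n q j" for j using c
    by (simp add: img_add img_idx P2_matrix_def supp_ia supp_ib supp_ic supp_d)
  ultimately show ?thesis by auto
qed

lemma Pairs_props:
  assumes "(p,q) \<in> Pairs n"
  shows "p \<noteq> q" "p \<noteq> 0" "p \<in> monoms_in {1..3*n+1}" "q \<in> monoms_in {1..3*n+1}"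
    "img n p j = img n q j"
  using Pairs_props0[OF assms] by auto


lemma mdvd2:
  assumes "a \<noteq> b" "1 \<le> lookup P a" "1 \<le> lookup P b"
  shows "mdvd (X a + X b) P"
  unfolding mdvd_def
proof
  fix k show "lookup (X a + X b) k \<le> lookup P k"
    using assms by (cases "k = a"; cases "k = b") (auto simp: lookup_add lookup_single)
qed

lemma mdvd3:
  assumes "a \<noteq> b" "a \<noteq> c" "b \<noteq> c" "1 \<le> lookup P a" "1 \<le> lookup P b" "1 \<le> lookup P c"
  shows "mdvd (X a + X b + X c) P"
  unfolding mdvd_def
proof
  fix k show "lookup (X a + X b + X c) k \<le> lookup P k"
    using assms by (cases "k = a"; cases "k = b"; cases "k = c") (auto simp: lookup_add lookup_single)
qed

lemma blk': "blk m i = lookup m (ia i) + lookup m (ib i) + lookup m (ic i)"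
  unfolding blk_def ia_def ib_def ic_def ..

lemma img_odd': "i < n \<Longrightarrow> img n m (2*i+1) = lookup m (ia i) + lookup m (ib i)"
  unfolding ia_def ib_def by (rule img_odd)
lemma img_even': "i < n \<Longrightarrow> img n m (2*i+2) = lookup m (ib i) + lookup m (ic i)"
  unfolding ic_def ib_def by (rule img_even)
lemma img_top': "img n m (2*n+1) = (\<Sum>i<n. blk m i) + lookup m (ia n)"
  unfolding ia_def by (rule img_top)

lemma fib:
  assumes im: "\<forall>j. img n P j = img n Q j"
  shows "i < n \<Longrightarrow> lookup P (ia i) + lookup P (ib i) = lookup Q (ia i) + lookup Q (ib i)"
    and "i < n \<Longrightarrow> lookup P (ib i) + lookup P (ic i) = lookup Q (ib i) + lookup Q (ic i)"
    and "(\<Sum>i<n. blk P i) + lookup P (ia n) = (\<Sum>i<n. blk Q i) + lookup Q (ia n)"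
proof -
  assume i: "i < n"
  show "lookup P (ia i) + lookup P (ib i) = lookup Q (ia i) + lookup Q (ib i)"
    using img_odd'[OF i, of P] img_odd'[OF i, of Q] im by metis
next
  assume i: "i < n"
  show "lookup P (ib i) + lookup P (ic i) = lookup Q (ib i) + lookup Q (ic i)"
    using img_even'[OF i, of P] img_even'[OF i, of Q] im by metis
next
  show "(\<Sum>i<n. blk P i) + lookup P (ia n) = (\<Sum>i<n. blk Q i) + lookup Q (ia n)"
    using img_top'[of n P] img_top'[of n Q] im by metis
qed

lemma E0:
  assumes im: "\<forall>j. img n P j = img n Q j" and i: "i < n"
    and lt: "lookup Q (ib i) < lookup P (ib i)"
  shows "\<exists>p q. (p,q) \<in> Pairs n \<and> mdvd p P \<and> mdvd q Q"
proof -
  note F1 = fib(1)[OF im] and F2 = fib(2)[OF im] and F3 = fib(3)[OF im]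
  have qa: "1 \<le> lookup Q (ia i)" using F1[OF i] lt by linarith
  have qc: "1 \<le> lookup Q (ic i)" using F2[OF i] lt by linarith
  have pb: "1 \<le> lookup P (ib i)" using lt by linarith
  show ?thesis
  proof (cases "lookup P (ia n) \<ge> 1")
    case True
    have "(X (ib i) + X (ia n), X (ia i) + X (ic i)) \<in> Pairs n" by (rule Pairs_b2[OF i])
    moreover have "mdvd (X (ib i) + X (ia n)) P" by (rule mdvd2) (use True pb in auto)
    moreover have "mdvd (X (ia i) + X (ic i)) Q" by (rule mdvd2) (use qa qc in auto)
    ultimately show ?thesis by blast
  next
    case False
    then have P0: "lookup P (ia n) = 0" by simp
    have "\<exists>j<n. lookup P (ib j) < lookup Q (ib j)"
    proof (rule ccontr)
      assume "\<not> (\<exists>j<n. lookup P (ib j) < lookup Q (ib j))"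
      then have ge: "\<And>j. j < n \<Longrightarrow> lookup Q (ib j) \<le> lookup P (ib j)" by auto
      have eq: "blk P j + (lookup P (ib j) - lookup Q (ib j)) = blk Q j" if "j < n" for j
        using F1[OF that] F2[OF that] ge[OF that] unfolding blk' by linarith
      have "(\<Sum>j<n. blk P j + (lookup P (ib j) - lookup Q (ib j))) = (\<Sum>j<n. blk Q j)"
        by (rule sum.cong) (auto simp: eq)
      then have s: "(\<Sum>j<n. blk P j) + (\<Sum>j<n. lookup P (ib j) - lookup Q (ib j)) = (\<Sum>j<n. blk Q j)"
        by (simp only: sum.distrib)
      have "lookup P (ib i) - lookup Q (ib i) \<le> (\<Sum>j<n. lookup P (ib j) - lookup Q (ib j))"
        using i by (intro member_le_sum) auto
      then show False using s F3 P0 lt by linarith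
    qed
    then obtain j where j: "j < n" "lookup P (ib j) < lookup Q (ib j)" by blast
    have ji: "j \<noteq> i" using j lt by auto
    have pa: "1 \<le> lookup P (ia j)" using F1[OF j(1)] j(2) by linarith
    have pc: "1 \<le> lookup P (ic j)" using F2[OF j(1)] j(2) by linarith
    have qb: "1 \<le> lookup Q (ib j)" using j(2) by linarith
    have "(X (ia j) + X (ic j) + X (ib i), X (ia i) + X (ic i) + X (ib j)) \<in> Pairs n"
      by (rule Pairs_c2[OF j(1) i ji])
    moreover have "mdvd (X (ia j) + X (ic j) + X (ib i)) P" by (rule mdvd3) (use pa pc pb in auto)
    moreover have "mdvd (X (ia i) + X (ic i) + X (ib j)) Q" by (rule mdvd3) (use qa qc qb in auto)
    ultimately show ?thesis by blast
  qed
qed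

lemma E:
  assumes P: "P \<in> monoms_in {1..3*n+1}" and Q: "Q \<in> monoms_in {1..3*n+1}"
    and im: "\<forall>j. img n P j = img n Q j" and ne: "P \<noteq> Q"
  shows "\<exists>p q. (p,q) \<in> Pairs n \<and> mdvd p P \<and> mdvd q Q"
proof (cases "\<exists>i<n. lookup P (ib i) \<noteq> lookup Q (ib i)")
  case True
  then obtain i where i: "i < n" "lookup P (ib i) \<noteq> lookup Q (ib i)" by blast
  show ?thesis
  proof (cases "lookup Q (ib i) < lookup P (ib i)")
    case True
    then show ?thesis using E0[OF im i(1)] by blast
  next
    case False
    then have "lookup P (ib i) < lookup Q (ib i)" using i by linarith
    moreover have "\<forall>j. img n Q j = img n P j" using im by simp
    ultimately obtain p q where "(p,q) \<in> Pairs n" "mdvd p Q" "mdvd q P" using E0[OF _ i(1)] by blast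
    then show ?thesis using Pairs_swap by blast
  qed
next
  case False
  note F1 = fib(1)[OF im] and F2 = fib(2)[OF im] and F3 = fib(3)[OF im]
  have eb: "lookup P (ib i) = lookup Q (ib i)" if "i < n" for i using False that by auto
  have ea: "lookup P (ia i) = lookup Q (ia i)" if "i < n" for i using F1[OF that] eb[OF that] by linarith
  have ec: "lookup P (ic i) = lookup Q (ic i)" if "i < n" for i using F2[OF that] eb[OF that] by linarith
  have "(\<Sum>i<n. blk P i) = (\<Sum>i<n. blk Q i)"
    by (rule sum.cong) (auto simp: blk' ea eb ec)
  then have ed: "lookup P (ia n) = lookup Q (ia n)" using F3 by linarith
  have "P = Q"
  proof (rule poly_mapping_eqI)
    fix k show "lookup P k = lookup Q k"
    proof (cases "k \<in> {1..3*n+1}")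
      case True
      then show ?thesis using idx_decomp[OF True] ea eb ec ed by auto
    next
      case False
      then have "k \<notin> keys P" "k \<notin> keys Q" using P Q unfolding monoms_in_def by auto
      then show ?thesis by (simp add: in_keys_iff)
    qed
  qed
  then show ?thesis using ne by simp
qed


lemma deg_pos: assumes "(p,q) \<in> Pairs n" shows "img n p (2*n+1) > 0"
  using assms
proof (cases rule: Pairs_cases2)
  case (a i) then show ?thesis
    by (simp add: img_add img_idx P2_matrix_def supp_ia supp_ib supp_ic supp_d)
next
  case (b i) then show ?thesis
    by (simp add: img_add img_idx P2_matrix_def supp_ia supp_ib supp_ic supp_d)
next
  case (c i j) then show ?thesis
    by (simp add: img_add img_idx P2_matrix_def supp_ia supp_ib supp_ic supp_d)
qed

lemma Kstrong:
  assumes mo: "monomial_order {1..3*n+1} ord"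
  shows "P \<in> monoms_in {1..3*n+1} \<Longrightarrow> Q \<in> monoms_in {1..3*n+1} \<Longrightarrow> (\<forall>j. img n P j = img n Q j)
    \<Longrightarrow> P \<noteq> Q \<Longrightarrow> ord Q P \<Longrightarrow> \<exists>p q. (p,q) \<in> Pairs n \<and> mdvd p P \<and> mdvd q Q \<and> ord q p"
proof (induction "img n P (2*n+1)" arbitrary: P Q rule: less_induct)
  case less
  interpret mono_ord "{1..3*n+1}" ord by (rule mono_ord.intro[OF mo])
  obtain p q where pq: "(p,q) \<in> Pairs n" "mdvd p P" "mdvd q Q" using E[OF less.prems(1-4)] by blast
  note pp = Pairs_props[OF pq(1)]
  show ?case
  proof (cases "ord q p")
    case True
    then show ?thesis using pq by blast
  next
    case False
    then have opq: "ord p q" using total pp by blast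
    define P' where "P' = P - p"
    define Q' where "Q' = Q - q"
    have P'M: "P' \<in> M" and Q'M: "Q' \<in> M" unfolding P'_def Q'_def using less.prems by (auto intro: monoms_diff)
    have Pe: "P = P' + p" unfolding P'_def using mdvd_diff_add[OF pq(2)] by simp
    have Qe: "Q = Q' + q" unfolding Q'_def using mdvd_diff_add[OF pq(3)] by simp
    have o1: "ord (Q' + p) Q" unfolding Qe using compat[OF pp(3) pp(4) Q'M opq] by (simp add: add.commute)
    have ne1: "Q' + p \<noteq> Q" unfolding Qe using pp(1) by simp
    have Q1M: "Q' + p \<in> M" using Q'M pp(3) by (rule monoms_add)
    have o2: "ord (Q' + p) P" using trans[OF Q1M less.prems(2) less.prems(1) o1 less.prems(5)] .
    have ne2: "Q' + p \<noteq> P"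
    proof
      assume "Q' + p = P"
      then have "ord P Q" using o1 by simp
      then show False using antisym less.prems by blast
    qed
    have o3: "ord Q' P'" using cancel[OF Q'M P'M pp(3)] o2 Pe by simp
    have ne3: "Q' \<noteq> P'" using ne2 Pe by auto
    have im: "\<forall>j. img n P' j = img n Q' j"
    proof
      fix j
      have "img n P' j + img n p j = img n Q' j + img n q j"
        using less.prems(3) Pe Qe img_add by metis
      then show "img n P' j = img n Q' j" using pp(5)[of j] by simp
    qed
    have lt: "img n P' (2*n+1) < img n P (2*n+1)"
      using deg_pos[OF pq(1)] Pe img_add by (metis less_add_same_cancel1)
    obtain p' q' where r: "(p',q') \<in> Pairs n" "mdvd p' P'" "mdvd q' Q'" "ord q' p'"
      using less.hyps[OF lt P'M Q'M im ne3[symmetric] o3] by blast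
    have "mdvd p' P" using r(2) mdvd_trans mdvd_diff unfolding P'_def by blast
    moreover have "mdvd q' Q" using r(3) mdvd_trans mdvd_diff unfolding Q'_def by blast
    ultimately show ?thesis using r by blast
  qed
qed

lemma polys_keys: "f \<in> polys_in S \<Longrightarrow> keys f \<subseteq> monoms_in S"
  unfolding polys_in_def by simp

lemma lm_in_ideal:
  assumes mo: "monomial_order {1..3*n+1} ord"
    and f: "f \<in> toric_ideal {1..3*n+1} (P2_matrix n)" and nz: "f \<noteq> 0"
  shows "\<exists>p q m'. (p,q) \<in> Pairs n \<and> mdvd p (lm ord f) \<and> ord q p \<and> m' \<in> keys f \<and> m' \<noteq> lm ord f \<and> mdvd q m'"
proof -
  interpret mono_ord "{1..3*n+1}" ord by (rule mono_ord.intro[OF mo])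
  have kf: "keys f \<subseteq> M" using f unfolding toric_ideal_def by (auto dest: polys_keys)
  define M0 where "M0 = lm ord f"
  have M0: "M0 \<in> keys f" "\<forall>m'\<in>keys f. ord m' M0" using lm_prop[OF nz kf] unfolding M0_def by auto
  define e where "e = image_exp (P2_matrix n) M0"
  define F where "F = {m \<in> keys f. image_exp (P2_matrix n) m = e}"
  have s0: "(\<Sum>m\<in>F. lookup f m) = 0" using f unfolding toric_ideal_def F_def by blast
  have "\<exists>m'\<in>F. m' \<noteq> M0"
  proof (rule ccontr)
    assume "\<not> ?thesis"
    then have "F = {M0}" using M0(1) unfolding F_def e_def by auto
    then have "lookup f M0 = 0" using s0 by simp
    then show False using M0(1) by (simp add: in_keys_iff)
  qed
  then obtain m' where m': "m' \<in> keys f" "image_exp (P2_matrix n) m' = e" "m' \<noteq> M0" unfolding F_def by blast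
  have m'M: "m' \<in> M" and M0M: "M0 \<in> M" using m'(1) M0(1) kf by auto
  have im: "\<forall>j. img n M0 j = img n m' j"
    using m'(2) image_eq[OF m'M] image_eq[OF M0M] unfolding e_def by simp
  have "ord m' M0" using M0(2) m'(1) by blast
  then show ?thesis
    using Kstrong[OF mo M0M m'M im m'(3)[symmetric]] m'(1,3) unfolding M0_def by blast
qed


lemma fsum:
  assumes "finite K" "keys f \<subseteq> K"
  shows "(\<Sum>m\<in>{m\<in>K. P m}. lookup f m) = (\<Sum>m\<in>{m\<in>keys f. P m}. lookup f m)"
  by (rule sum.mono_neutral_right) (use assms in \<open>auto simp: in_keys_iff\<close>)

lemma toric_diff:
  assumes f: "f \<in> toric_ideal S A" and g: "g \<in> toric_ideal S A"
  shows "f - g \<in> toric_ideal S A"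
proof -
  have kd: "keys (f - g) \<subseteq> keys f \<union> keys g"
    by (auto simp: in_keys_iff lookup_minus)
  have "keys f \<subseteq> monoms_in S" "keys g \<subseteq> monoms_in S"
    using f g unfolding toric_ideal_def polys_in_def by auto
  then have "f - g \<in> polys_in S" using kd unfolding polys_in_def by blast
  moreover have "(\<Sum>m\<in>{m \<in> keys (f - g). image_exp A m = e}. lookup (f - g) m) = 0" for e
  proof -
    define K where "K = keys f \<union> keys g"
    have fK: "finite K" unfolding K_def by simp
    have "(\<Sum>m\<in>{m \<in> keys (f - g). image_exp A m = e}. lookup (f - g) m)
        = (\<Sum>m\<in>{m \<in> K. image_exp A m = e}. lookup (f - g) m)"
      using fsum[OF fK, of "f - g"] kd unfolding K_def by simp
    also have "\<dots> = (\<Sum>m\<in>{m \<in> K. image_exp A m = e}. lookup f m) - (\<Sum>m\<in>{m \<in> K. image_exp A m = e}. lookup g m)"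
      by (simp add: lookup_minus sum_subtractf)
    also have "\<dots> = (\<Sum>m\<in>{m \<in> keys f. image_exp A m = e}. lookup f m) - (\<Sum>m\<in>{m \<in> keys g. image_exp A m = e}. lookup g m)"
      using fsum[OF fK, of f] fsum[OF fK, of g] unfolding K_def by simp
    also have "\<dots> = 0" using f g unfolding toric_ideal_def by simp
    finally show ?thesis .
  qed
  ultimately show ?thesis unfolding toric_ideal_def by blast
qed

lemma binom_in_I:
  assumes pq: "(p,q) \<in> Pairs n"
  shows "binom p q \<in> toric_ideal {1..3*n+1} (P2_matrix n)"
proof -
  note pp = Pairs_props[OF pq]
  have kb: "keys (binom p q) = {p, q}" using pp(1) unfolding binom_def
    by (auto simp: in_keys_iff lookup_minus lookup_single)
  have "binom p q \<in> polys_in {1..3*n+1}" unfolding polys_in_def using kb pp by auto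
  moreover have ie: "image_exp (P2_matrix n) p = image_exp (P2_matrix n) q"
    using image_eq[OF pp(3)] image_eq[OF pp(4)] pp(5) by auto
  moreover have "(\<Sum>m\<in>{m \<in> keys (binom p q). image_exp (P2_matrix n) m = e}. lookup (binom p q) m) = 0" for e
  proof (cases "image_exp (P2_matrix n) p = e")
    case True
    then have "{m \<in> keys (binom p q). image_exp (P2_matrix n) m = e} = {p, q}" using kb ie by auto
    then show ?thesis using pp(1) by (simp add: binom_def lookup_minus lookup_single)
  next
    case False
    then have E: "{m \<in> keys (binom p q). image_exp (P2_matrix n) m = e} = {}" using kb ie by auto
    show ?thesis unfolding E by simp
  qed
  ultimately show ?thesis unfolding toric_ideal_def by blast
qed

lemma A_dir:
  assumes mo: "monomial_order {1..3*n+1} ord"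
    and G: "reduced_groebner_basis ord (toric_ideal {1..3*n+1} (P2_matrix n)) G"
    and gG: "g \<in> G"
  shows "\<exists>p q. (p,q) \<in> Pairs n \<and> g = binom p q"
proof -
  interpret mono_ord "{1..3*n+1}" ord by (rule mono_ord.intro[OF mo])
  let ?I = "toric_ideal {1..3*n+1} (P2_matrix n)"
  have GI: "G \<subseteq> ?I" and gb: "\<And>f. f \<in> ?I \<Longrightarrow> f \<noteq> 0 \<Longrightarrow> \<exists>g'\<in>G. g' \<noteq> 0 \<and> mdvd (lm ord g') (lm ord f)"
    and z: "0 \<notin> G" and lc1: "\<And>g. g \<in> G \<Longrightarrow> lc ord g = 1"
    and red: "\<And>g g' m. g \<in> G \<Longrightarrow> g' \<in> G \<Longrightarrow> g' \<noteq> g \<Longrightarrow> m \<in> keys g \<Longrightarrow> \<not> mdvd (lm ord g') m"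
    using G unfolding reduced_groebner_basis_def groebner_basis_def by blast+
  have gI: "g \<in> ?I" using gG GI by blast
  have gnz: "g \<noteq> 0" using gG z by blast
  have kg: "keys g \<subseteq> M" using gI unfolding toric_ideal_def by (auto dest: polys_keys)
  define Lg where "Lg = lm ord g"
  have Lg: "Lg \<in> keys g" "\<forall>m'\<in>keys g. ord m' Lg" using lm_prop[OF gnz kg] unfolding Lg_def by auto
  obtain p q m' where pqm: "(p,q) \<in> Pairs n" "mdvd p Lg" "ord q p" "m' \<in> keys g" "mdvd q m'"
    using lm_in_ideal[OF mo gI gnz] unfolding Lg_def by blast
  note pp = Pairs_props[OF pqm(1)]
  define b where "b = binom p q"
  have bI: "b \<in> ?I" unfolding b_def by (rule binom_in_I[OF pqm(1)])
  have bnz: "b \<noteq> 0" unfolding b_def using binom_neq0[OF pp(1)] .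
  have lmb: "lm ord b = p" "lc ord b = 1" unfolding b_def using lm_binom[OF pp(1) pp(3) pp(4) pqm(3)] by auto
  obtain g' where g': "g' \<in> G" "mdvd (lm ord g') p" using gb[OF bI bnz] lmb by auto
  have "g' = g"
  proof (rule ccontr)
    assume "g' \<noteq> g"
    then show False using red[OF gG g'(1) _ Lg(1)] g'(2) pqm(2) mdvd_trans by blast
  qed
  then have "p = Lg" using g'(2) pqm(2) mdvd_antisym unfolding Lg_def by blast
  define h where "h = g - b"
  have hI: "h \<in> ?I" unfolding h_def using gI bI by (rule toric_diff)
  have "h = 0"
  proof (rule ccontr)
    assume hnz: "h \<noteq> 0"
    have kh: "keys h \<subseteq> M" using hI unfolding toric_ideal_def by (auto dest: polys_keys)
    define Lh where "Lh = lm ord h"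
    have Lh: "Lh \<in> keys h" using lm_prop[OF hnz kh] unfolding Lh_def by auto
    have lb: "lookup b m = (if m = p then 1 else if m = q then -1 else 0)" for m
      unfolding b_def binom_def using pp(1) by (simp add: lookup_minus lookup_single)
    have "lookup h p = 0"
      unfolding h_def using lc1[OF gG] \<open>p = Lg\<close> lb unfolding lc_def Lg_def by (simp add: lookup_minus)
    then have Lhp: "Lh \<noteq> p" using Lh by (auto simp: in_keys_iff)
    have "Lh \<in> keys g \<or> Lh = q"
    proof (rule ccontr)
      assume "\<not> (Lh \<in> keys g \<or> Lh = q)"
      then have "lookup h Lh = 0" unfolding h_def using Lhp lb by (simp add: lookup_minus in_keys_iff)
      then show False using Lh by (simp add: in_keys_iff)
    qed
    moreover obtain g'' where g'': "g'' \<in> G" "mdvd (lm ord g'') Lh" using gb[OF hI hnz] unfolding Lh_def by blast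
    ultimately show False
    proof (elim disjE)
      assume a: "Lh \<in> keys g"
      show False
      proof (cases "g'' = g")
        case True
        then have "mdvd Lg Lh" using g''(2) unfolding Lg_def by simp
        then have "ord Lg Lh" using dvd_ord kg a Lg(1) by blast
        moreover have "ord Lh Lg" using Lg(2) a by blast
        ultimately have "Lh = Lg" using antisym kg a Lg(1) by blast
        then show False using Lhp \<open>p = Lg\<close> by simp
      next
        case False
        then show False using red[OF gG g''(1) False a] g''(2) by blast
      qed
    next
      assume a: "Lh = q"
      have d: "mdvd (lm ord g'') m'" using g''(2) a pqm(5) mdvd_trans by blast
      show False
      proof (cases "g'' = g")
        case True
        then have "mdvd p q" using g''(2) a \<open>p = Lg\<close> unfolding Lg_def by simp
        then have "ord p q" using dvd_ord pp by blast
        then have "p = q" using antisym pp pqm(3) by blast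
        then show False using pp(1) by simp
      next
        case False
        then show False using red[OF gG g''(1) False pqm(4)] d by blast
      qed
    qed
  qed
  then have "g = binom p q" unfolding h_def b_def by simp
  then show ?thesis using pqm(1) by blast
qed


definition keyL :: "nat \<Rightarrow> nat list" where "keyL n = ia n # [0..<3*n+2]"
definition key :: "nat \<Rightarrow> monom \<Rightarrow> nat list" where "key n m = map (lookup m) (keyL n)"
definition ordB :: "nat \<Rightarrow> monom \<Rightarrow> monom \<Rightarrow> bool" where
  "ordB n m m' \<longleftrightarrow> key n m = key n m' \<or> (key n m, key n m') \<in> lexord less_than"

lemma key_inj:
  assumes "m \<in> monoms_in {1..3*n+1}" "m' \<in> monoms_in {1..3*n+1}" "key n m = key n m'"
  shows "m = m'"
proof (rule poly_mapping_eqI)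
  fix k
  show "lookup m k = lookup m' k"
  proof (cases "k < 3*n+2")
    case True
    then have "k \<in> {0..<3*n+2}" by simp
    then have "k \<in> set (keyL n)" unfolding keyL_def set_simps set_upt by blast
    then show ?thesis using assms(3) unfolding key_def map_eq_conv by blast
  next
    case False
    then have "k \<notin> keys m" "k \<notin> keys m'" using assms(1,2) unfolding monoms_in_def by auto
    then show ?thesis by (simp add: in_keys_iff)
  qed
qed

lemma lexadd:
  "(map f L, map g L) \<in> lexord less_than \<Longrightarrow>
   (map (\<lambda>k. f k + h k) L, map (\<lambda>k. g k + h k) L) \<in> lexord less_than"
  by (induction L) auto

lemma key_add: "key n (m + u) = map (\<lambda>k. lookup m k + lookup u k) (keyL n)"
  unfolding key_def by (simp add: lookup_add)

lemma asym_lt: "asym less_than"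
  by (rule asymI) simp

lemma ordB_mo: "monomial_order {1..3*n+1} (ordB n)"
  unfolding monomial_order_def
proof (intro conjI ballI impI allI)
  fix m assume "m \<in> monoms_in {1..3*n+1}"
  show "ordB n m m" unfolding ordB_def by simp
next
  fix m m' assume mm: "m \<in> monoms_in {1..3*n+1}" "m' \<in> monoms_in {1..3*n+1}" "ordB n m m' \<and> ordB n m' m"
  have "key n m = key n m'"
  proof (rule ccontr)
    assume ne: "key n m \<noteq> key n m'"
    then have "(key n m, key n m') \<in> lexord less_than" "(key n m', key n m) \<in> lexord less_than"
      using mm(3) unfolding ordB_def by auto
    then show False using lexord_asymmetric[OF asym_lt] by blast
  qed
  then show "m = m'" using key_inj mm by blast
next
  fix m1 m2 m3 assume "ordB n m1 m2 \<and> ordB n m2 m3"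
  then show "ordB n m1 m3" unfolding ordB_def using lexord_trans[OF _ _ trans_less_than] by metis
next
  fix m m' show "ordB n m m' \<or> ordB n m' m"
  proof -
    have "\<forall>a b. (a,b) \<in> less_than \<or> a = b \<or> (b,a) \<in> less_than" by auto
    then show ?thesis unfolding ordB_def using lexord_linear[of less_than "key n m" "key n m'"] by blast
  qed
next
  show "wf {(m, m'). m \<in> monoms_in {1..3*n+1} \<and> m' \<in> monoms_in {1..3*n+1} \<and> ordB n m m' \<and> m \<noteq> m'}"
  proof (rule wf_subset[OF wf_inv_image[OF wf_lex[OF wf_less_than], of "key n"]])
    show "{(m, m'). m \<in> monoms_in {1..3*n+1} \<and> m' \<in> monoms_in {1..3*n+1} \<and> ordB n m m' \<and> m \<noteq> m'}
      \<subseteq> inv_image (lex less_than) (key n)"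
    proof (clarsimp)
      fix m m' assume a: "m \<in> monoms_in {Suc 0..Suc (3 * n)}" "m' \<in> monoms_in {Suc 0..Suc (3 * n)}" "ordB n m m'" "m \<noteq> m'"
      have "key n m \<noteq> key n m'" using key_inj a by auto
      then have "(key n m, key n m') \<in> lexord less_than" using a(3) unfolding ordB_def by blast
      moreover have "length (key n m) = length (key n m')" unfolding key_def by simp
      ultimately show "(key n m, key n m') \<in> lex less_than" by (simp add: lexord_lex)
    qed
  qed
next
  fix m m' u assume "ordB n m m'"
  then show "ordB n (m + u) (m' + u)"
    unfolding ordB_def key_add using lexadd[of "lookup m" "keyL n" "lookup m'" "lookup u"]
    unfolding key_def by auto
qed

lemma ordB_a:
  assumes "i < n"
  shows "ordB n (X (ia i) + X (ic i)) (X (ib i) + X (ia n))"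
    "\<not> ordB n (X (ib i) + X (ia n)) (X (ia i) + X (ic i))"
  using assms unfolding ordB_def key_def keyL_def by (simp_all add: lookup_add lookup_single)


definition GS :: "nat \<Rightarrow> mpoly set" where
  "GS n = {binom p q | p q. (p,q) \<in> Pairs n \<and> ordB n q p}"

lemma Pairs_finite: "finite (Pairs n)"
proof -
  have f1: "finite {(X (3*i+1) + X (3*i+3), X (3*i+2) + X (3*n+1)) | i. i < n}"
    by (rule finite_image_set) simp
  have f2: "finite {(X (3*i+2) + X (3*n+1), X (3*i+1) + X (3*i+3)) | i. i < n}"
    by (rule finite_image_set) simp
  have f3: "finite {(X (3*i+1) + X (3*i+3) + X (3*j+2), X (3*j+1) + X (3*j+3) + X (3*i+2)) | i j. i < n \<and> j < n}"
    by (rule finite_image_set2) simp_all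
  have "{(X (3*i+1) + X (3*i+3) + X (3*j+2), X (3*j+1) + X (3*j+3) + X (3*i+2)) | i j. i < n \<and> j < n \<and> i \<noteq> j}
    \<subseteq> {(X (3*i+1) + X (3*i+3) + X (3*j+2), X (3*j+1) + X (3*j+3) + X (3*i+2)) | i j. i < n \<and> j < n}"
    by blast
  then have f4: "finite {(X (3*i+1) + X (3*i+3) + X (3*j+2), X (3*j+1) + X (3*j+3) + X (3*i+2)) | i j. i < n \<and> j < n \<and> i \<noteq> j}"
    using f3 by (rule finite_subset)
  show ?thesis unfolding Pairs_def using f1 f2 f4 by (intro finite_UnI)
qed

lemma red_core:
  assumes pq: "(p,q) \<in> Pairs n" and o: "ordB n q p" and pq': "(p',q') \<in> Pairs n" and o': "ordB n q' p'"
    and m: "m = p \<or> m = q" and d: "mdvd p' m"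
  shows "p' = p \<and> q' = q"
proof -
  interpret mono_ord "{1..3*n+1}" "ordB n" by (rule mono_ord.intro[OF ordB_mo])
  have dv: "\<And>k. lookup p' k \<le> lookup m k" using d unfolding mdvd_def by blast
  note pp = Pairs_props[OF pq]
  from pq' show ?thesis
  proof (cases rule: Pairs_cases2)
    case (a k)
    then show ?thesis using o' ordB_a(2)[OF a(1)] by simp
  next
    case (b k)
    note B = b
    have d1: "1 \<le> lookup m (ia n)" using dv[of "ia n"] B by (simp add: lookup_add lookup_single)
    have d2: "1 \<le> lookup m (ib k)" using dv[of "ib k"] B by (simp add: lookup_add lookup_single)
    from pq show ?thesis
    proof (cases rule: Pairs_cases2)
      case (a i)
      then show ?thesis using o ordB_a(2)[OF a(1)] by simp
    next
      case (b i)
      note b' = b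
      show ?thesis
      proof (cases "m = p")
        case True
        then have "i = k" using d2 b' by (simp add: lookup_add lookup_single when_def split: if_splits)
        then show ?thesis using B b' by simp
      next
        case False
        then have "m = q" using m by simp
        then have False using d1 b' by (simp add: lookup_add lookup_single)
        then show ?thesis ..
      qed
    next
      case (c i j)
      have False using m d1 c by (auto simp: lookup_add lookup_single)
      then show ?thesis ..
    qed
  next
    case (c k l)
    note C = c
    have d1: "1 \<le> lookup m (ia k)" using dv[of "ia k"] c by (simp add: lookup_add lookup_single)
    have d3: "1 \<le> lookup m (ib l)" using dv[of "ib l"] c by (simp add: lookup_add lookup_single)
    from pq show ?thesis
    proof (cases rule: Pairs_cases2)
      case (a i)
      then show ?thesis using o ordB_a(2)[OF a(1)] by simp
    next
      case (b i)
      have False using m d1 d3 b C(1) by (auto simp: lookup_add lookup_single)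
      then show ?thesis ..
    next
      case (c i j)
      note c' = c
      show ?thesis
      proof (cases "m = p")
        case True
        then have "i = k" "j = l" using d1 d3 c' by (simp_all add: lookup_add lookup_single when_def split: if_splits)
        then show ?thesis using C c' by simp
      next
        case False
        then have "m = q" using m by simp
        then have "j = k" "i = l" using d1 d3 c' by (simp_all add: lookup_add lookup_single when_def split: if_splits)
        then have "p' = q" "q' = p" using C c' by simp_all
        then have "ordB n p q" using o' by simp
        then have "p = q" using antisym pp o by blast
        then show ?thesis using pp(1) by simp
      qed
    qed
  qed
qed

lemma rgbI:
  assumes fin: "finite G" and sub: "G \<subseteq> I"
    and gb: "\<And>f. f \<in> I \<Longrightarrow> f \<noteq> 0 \<Longrightarrow> \<exists>g\<in>G. g \<noteq> 0 \<and> mdvd (lm ord g) (lm ord f)"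
    and z: "0 \<notin> G" and lc1: "\<And>g. g \<in> G \<Longrightarrow> lc ord g = 1"
    and red: "\<And>g g' m. g \<in> G \<Longrightarrow> g' \<in> G - {g} \<Longrightarrow> m \<in> keys g \<Longrightarrow> \<not> mdvd (lm ord g') m"
  shows "reduced_groebner_basis ord I G"
  unfolding reduced_groebner_basis_def groebner_basis_def
  using assms by blast

lemma GS_rgb: "reduced_groebner_basis (ordB n) (toric_ideal {1..3*n+1} (P2_matrix n)) (GS n)"
proof -
  interpret mono_ord "{1..3*n+1}" "ordB n" by (rule mono_ord.intro[OF ordB_mo])
  have GSe: "g \<in> GS n \<longleftrightarrow> (\<exists>p q. g = binom p q \<and> (p,q) \<in> Pairs n \<and> ordB n q p)" for g
    unfolding GS_def by blast
  have fin: "finite (GS n)"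
  proof -
    have "GS n \<subseteq> (\<lambda>(p,q). binom p q) ` Pairs n" unfolding GS_def by auto
    then show ?thesis by (rule finite_subset[OF _ finite_imageI[OF Pairs_finite]])
  qed
  have sub: "GS n \<subseteq> toric_ideal {1..3*n+1} (P2_matrix n)"
    using binom_in_I unfolding GS_def by blast
  have gb: "\<exists>g\<in>GS n. g \<noteq> 0 \<and> mdvd (lm (ordB n) g) (lm (ordB n) f)"
    if f: "f \<in> toric_ideal {1..3*n+1} (P2_matrix n)" "f \<noteq> 0" for f
  proof -
    obtain p q where pq: "(p,q) \<in> Pairs n" "mdvd p (lm (ordB n) f)" "ordB n q p"
      using lm_in_ideal[OF ordB_mo f] by blast
    note pp = Pairs_props[OF pq(1)]
    have "binom p q \<in> GS n" using pq GSe by blast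
    moreover have "binom p q \<noteq> 0" by (rule binom_neq0[OF pp(1)])
    moreover have "lm (ordB n) (binom p q) = p" using lm_binom[OF pp(1) pp(3) pp(4) pq(3)] by simp
    ultimately show ?thesis using pq(2) by (intro bexI[of _ "binom p q"]) auto
  qed
  have z: "0 \<notin> GS n"
  proof
    assume "0 \<in> GS n"
    then obtain p q where pq0: "0 = binom p q" "(p,q) \<in> Pairs n" using GSe by blast
    have "binom p q \<noteq> 0" by (rule binom_neq0[OF Pairs_props(1)[OF pq0(2)]])
    then show False using pq0(1) by simp
  qed
  have lc: "lc (ordB n) g = 1" if gG: "g \<in> GS n" for g
  proof -
    obtain p q where g: "g = binom p q" "(p,q) \<in> Pairs n" "ordB n q p" using gG GSe by blast
    note pp = Pairs_props[OF g(2)]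
    show ?thesis using lm_binom[OF pp(1) pp(3) pp(4) g(3)] g(1) by simp
  qed
  have red: "\<not> mdvd (lm (ordB n) g') m" if gG: "g \<in> GS n" and g'G: "g' \<in> GS n - {g}" and mk: "m \<in> keys g" for g g' m
  proof
    assume d: "mdvd (lm (ordB n) g') m"
    obtain p q where g: "g = binom p q" "(p,q) \<in> Pairs n" "ordB n q p" using gG GSe by blast
    obtain p' q' where g': "g' = binom p' q'" "(p',q') \<in> Pairs n" "ordB n q' p'" using g'G GSe by blast
    note pp = Pairs_props[OF g(2)] and pp' = Pairs_props[OF g'(2)]
    have "m = p \<or> m = q" using mk keys_binom[OF pp(1)] g(1) by auto
    moreover have "lm (ordB n) g' = p'" using lm_binom[OF pp'(1) pp'(3) pp'(4) g'(3)] g'(1) by simp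
    ultimately have "p' = p \<and> q' = q" using red_core[OF g(2) g(3) g'(2) g'(3)] d by simp
    then have "g' = g" using g g' by simp
    then show False using g'G by simp
  qed
  show ?thesis by (rule rgbI[OF fin sub gb z lc red])
qed

lemma UGB_sub: "x \<in> universal_groebner_basis {1..3*n+1} (toric_ideal {1..3*n+1} (P2_matrix n))
   \<Longrightarrow> \<exists>p q. (p,q) \<in> Pairs n \<and> x = binom p q"
proof -
  assume "x \<in> universal_groebner_basis {1..3*n+1} (toric_ideal {1..3*n+1} (P2_matrix n))"
  then obtain G where G: "x \<in> G" "\<exists>ord. monomial_order {1..3*n+1} ord \<and>
       reduced_groebner_basis ord (toric_ideal {1..3*n+1} (P2_matrix n)) G"
    unfolding universal_groebner_basis_def by blast
  then obtain ord where "monomial_order {1..3*n+1} ord"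
       "reduced_groebner_basis ord (toric_ideal {1..3*n+1} (P2_matrix n)) G" by blast
  then show ?thesis using A_dir G(1) by blast
qed

lemma GSU: "GS n \<subseteq> universal_groebner_basis {1..3*n+1} (toric_ideal {1..3*n+1} (P2_matrix n))"
proof -
  have "GS n \<in> {G. \<exists>ord. monomial_order {1..3*n+1} ord \<and>
       reduced_groebner_basis ord (toric_ideal {1..3*n+1} (P2_matrix n)) G}"
    using ordB_mo GS_rgb by blast
  then show ?thesis unfolding universal_groebner_basis_def by (rule Union_upper)
qed

lemma UGB_char:
  "pm_closure (universal_groebner_basis {1..3*n+1} (toric_ideal {1..3*n+1} (P2_matrix n)))
    = (\<lambda>(p,q). binom p q) ` Pairs n"
  (is "pm_closure ?U = ?R")
proof
  show "pm_closure ?U \<subseteq> ?R"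
  proof
    fix x assume "x \<in> pm_closure ?U"
    then consider "x \<in> ?U" | y where "y \<in> ?U" "x = - y" unfolding pm_closure_def by blast
    then show "x \<in> ?R"
    proof cases
      case 1
      then obtain p q where "(p,q) \<in> Pairs n" "x = binom p q" using UGB_sub by blast
      then show ?thesis using img_Pairs by blast
    next
      case (2 y)
      then obtain p q where pq: "(p,q) \<in> Pairs n" "y = binom p q" using UGB_sub by blast
      have "x = binom q p" using 2(2) pq(2) binom_swap by simp
      then show ?thesis using img_Pairs Pairs_swap[OF pq(1)] by blast
    qed
  qed
next
  show "?R \<subseteq> pm_closure ?U"
  proof
    fix v assume "v \<in> ?R"
    then obtain p q where pq: "(p,q) \<in> Pairs n" "v = binom p q" by auto
    interpret mono_ord "{1..3*n+1}" "ordB n" by (rule mono_ord.intro[OF ordB_mo])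
    note pp = Pairs_props[OF pq(1)]
    show "v \<in> pm_closure ?U"
    proof (cases "ordB n q p")
      case True
      then have "v \<in> GS n" unfolding GS_def using pq by blast
      then have "v \<in> ?U" using GSU by blast
      then show ?thesis unfolding pm_closure_def by (rule UnI1)
    next
      case False
      then have "ordB n p q" using total[OF pp(3) pp(4)] by blast
      then have "binom q p \<in> GS n" unfolding GS_def using Pairs_swap[OF pq(1)] by blast
      then have "binom q p \<in> ?U" using GSU by blast
      moreover have "v = - binom q p" using pq(2) binom_swap by simp
      ultimately show ?thesis unfolding pm_closure_def by blast
    qed
  qed
qed

theorem mainTheorem7:
  fixes n :: nat
  assumes "n \<ge> 1"
  shows "pm_closure (universal_groebner_basis {1..3*n+1}
            (toric_ideal {1..3*n+1} (P2_matrix n)))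
         = pm_closure (V'_set n \<union> V''_set n)"
  using UGB_char pm_closure_V[OF assms] by simp


end
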